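(* Let $L/K$ be a vast extension of fields of characteristic $0$, and let $K'/K$ be a finite extension which is disjoint from $L/K$. Then the extension $LK'/K'$ is vast.
   Context: All fields lie in a fixed algebraic closure and have characteristic zero. Two algebraic extensions of $K$ are disjoint over $K$ if they are linearly disjoint over $K$. An algebraic extension $L/K$ is called vast if $L \neq K$ and for every finite extension $E/K$ there exists a subfield $M$ of $L$ with $M \supsetneq K$ such that $M$ and $E$ are disjoint over $K$. *)

theory Defs
  imports "HOL-Computational_Algebra.Polynomial"
begin

text \<open>All fields are subfields of an ambient algebraically closed field of
characteristic zero (the type 'a).\<close>

definition alg_closed_type :: "'a::field itself \<Rightarrow> bool" where
  "alg_closed_type _ \<longleftrightarrow> (\<forall>p::'a poly. degree p > 0 \<longrightarrow> (\<exists>x. poly p x = 0))"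

definition is_subfield :: "'a::field set \<Rightarrow> bool" where
  "is_subfield F \<longleftrightarrow> 0 \<in> F \<and> 1 \<in> F \<and>
     (\<forall>x\<in>F. \<forall>y\<in>F. x + y \<in> F \<and> x - y \<in> F \<and> x * y \<in> F) \<and>
     (\<forall>x\<in>F. x \<noteq> 0 \<longrightarrow> inverse x \<in> F)"

definition lin_indep_over :: "'a::field set \<Rightarrow> 'a set \<Rightarrow> bool" where
  "lin_indep_over K S \<longleftrightarrow>
     (\<forall>T c. finite T \<longrightarrow> T \<subseteq> S \<longrightarrow> (\<forall>x\<in>T. c x \<in> K) \<longrightarrow>
        (\<Sum>x\<in>T. c x * x) = 0 \<longrightarrow> (\<forall>x\<in>T. c x = 0))"

definition span_over :: "'a::field set \<Rightarrow> 'a set \<Rightarrow> 'a set" where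
  "span_over K S = {\<Sum>x\<in>T. c x * x | T c. finite T \<and> T \<subseteq> S \<and> (\<forall>x\<in>T. c x \<in> K)}"

definition field_ext :: "'a::field set \<Rightarrow> 'a set \<Rightarrow> bool" where
  "field_ext K L \<longleftrightarrow> is_subfield K \<and> is_subfield L \<and> K \<subseteq> L"

definition finite_ext :: "'a::field set \<Rightarrow> 'a set \<Rightarrow> bool" where
  "finite_ext K E \<longleftrightarrow> field_ext K E \<and> (\<exists>B. finite B \<and> B \<subseteq> E \<and> span_over K B = E)"

definition algebraic_over :: "'a::field set \<Rightarrow> 'a \<Rightarrow> bool" where
  "algebraic_over K x \<longleftrightarrow> (\<exists>p::'a poly. p \<noteq> 0 \<and> (\<forall>i. coeff p i \<in> K) \<and> poly p x = 0)"

definition algebraic_ext :: "'a::field set \<Rightarrow> 'a set \<Rightarrow> bool" where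
  "algebraic_ext K L \<longleftrightarrow> field_ext K L \<and> (\<forall>x\<in>L. algebraic_over K x)"

definition lin_disjoint :: "'a::field set \<Rightarrow> 'a set \<Rightarrow> 'a set \<Rightarrow> bool" where
  "lin_disjoint K E L \<longleftrightarrow> (\<forall>S. S \<subseteq> E \<longrightarrow> lin_indep_over K S \<longrightarrow> lin_indep_over L S)"

definition compositum :: "'a::field set \<Rightarrow> 'a set \<Rightarrow> 'a set" where
  "compositum A B = \<Inter>{F. is_subfield F \<and> A \<union> B \<subseteq> F}"

definition vast :: "'a::field set \<Rightarrow> 'a set \<Rightarrow> bool" where
  "vast K L \<longleftrightarrow> algebraic_ext K L \<and> L \<noteq> K \<and>
     (\<forall>E. finite_ext K E \<longrightarrow>
        (\<exists>M. is_subfield M \<and> K \<subset> M \<and> M \<subseteq> L \<and> lin_disjoint K M E))"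

end

theory Submission
  imports Defs "HOL-Algebra.Finite_Extensions"
begin

definition RR :: "'a::field ring" where
  "RR = \<lparr>carrier = UNIV, monoid.mult = (\<lambda>x y. x * y), one = 1, ring.zero = 0, add = (\<lambda>x y. x + y)\<rparr>"

lemma RR_simps [simp]:
  "carrier RR = UNIV" "mult RR = (\<lambda>x y. x * y)" "one RR = 1" "zero RR = 0" "add RR = (\<lambda>x y. x + y)"
  by (simp_all add: RR_def)

lemma field_RR: "field (RR :: 'a::field ring)"
proof -
  have "\<exists>y. x + y = 0" for x :: 'a
    using add.right_inverse by blast
  moreover have "x \<noteq> 0 \<Longrightarrow> \<exists>y. x * y = 1" for x :: 'a
    by (rule exI[of _ "inverse x"]) auto
  ultimately show ?thesis
    unfolding RR_def using add.right_inverse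
    by unfold_locales (auto simp:algebra_simps Units_def)
qed

interpretation R: domain "RR :: 'a::field ring"
  by (rule field.axioms(1)[OF field_RR])

lemma RR_ainv [simp]: "a_inv RR x = - (x::'a::field)"
  using R.minus_equality[of "-x" x] by simp

lemma RR_minus [simp]: "a_minus RR x y = x - (y::'a::field)"
  by (simp add: a_minus_def)

lemma RR_pow [simp]: "x [^]\<^bsub>RR\<^esub> (n::nat) = (x::'a::field) ^ n"
  by (induct n) auto

lemma RR_inv [simp]: "(x::'a::field) \<noteq> 0 \<Longrightarrow> inv\<^bsub>RR\<^esub> x = inverse x"
  using R.inv_char[of x "inverse x"] by simp

declare R.Span.simps[simp del]

lemma is_subfield_imp: "is_subfield (F::'a::field set) \<Longrightarrow> subfield F RR"
proof -
  assume F: "is_subfield F"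
  have sr: "subring F RR"
  proof (rule R.subringI)
    show "F \<subseteq> carrier RR" by simp
    show "\<one>\<^bsub>RR\<^esub> \<in> F" using F by (simp add: is_subfield_def)
    fix h assume "h \<in> F" thus "\<ominus>\<^bsub>RR\<^esub> h \<in> F" using F unfolding is_subfield_def
      by (metis RR_ainv diff_0)
  next
    fix h1 h2 assume "h1 \<in> F" "h2 \<in> F"
    thus "h1 \<otimes>\<^bsub>RR\<^esub> h2 \<in> F" "h1 \<oplus>\<^bsub>RR\<^esub> h2 \<in> F" using F by (auto simp: is_subfield_def)
  qed
  show ?thesis
  proof (rule field.subfieldI'[OF field_RR sr])
    fix k assume "k \<in> F - {\<zero>\<^bsub>RR\<^esub>}"
    thus "inv\<^bsub>RR\<^esub> k \<in> F" using F by (auto simp: is_subfield_def)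
  qed
qed

lemma imp_is_subfield: "subfield (F::'a::field set) RR \<Longrightarrow> is_subfield F"
proof -
  assume F: "subfield F RR"
  note E = subringE[OF subfieldE(1)[OF F]]
  have "x - y \<in> F" if "x \<in> F" "y \<in> F" for x y
    using E(7)[OF that(1) E(5)[OF that(2)]] by simp
  moreover have "inverse x \<in> F" if "x \<in> F" "x \<noteq> 0" for x
    using R.subfield_m_inv(1)[OF F, of x] that by simp
  ultimately show ?thesis using E(2,3,6,7) unfolding is_subfield_def by auto
qed

lemma is_subfield_iff: "is_subfield (F::'a::field set) \<longleftrightarrow> subfield F RR"
  using is_subfield_imp imp_is_subfield by blast

lemma combine_sum:
  fixes Us Ks :: "'a::field list"
  assumes "distinct Us" "length Ks = length Us"
  shows "\<exists>c. set Ks = c ` set Us \<and> R.combine Ks Us = (\<Sum>x\<in>set Us. c x * x)"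
  using assms
proof (induct Us arbitrary: Ks)
  case Nil thus ?case by simp
next
  case (Cons u Us)
  then obtain k Ks' where Ks: "Ks = k # Ks'" by (cases Ks) auto
  have "\<exists>c. set Ks' = c ` set Us \<and> R.combine Ks' Us = (\<Sum>x\<in>set Us. c x * x)"
    using Cons.hyps[of Ks'] Cons.prems Ks by auto
  then obtain c where c: "set Ks' = c ` set Us" "R.combine Ks' Us = (\<Sum>x\<in>set Us. c x * x)"
    by blast
  have un: "u \<notin> set Us" using Cons by simp
  define c' where "c' = c(u := k)"
  have "set Ks = c' ` set (u # Us)" using c un by (auto simp: Ks c'_def)
  moreover have "(\<Sum>x\<in>set Us. c' x * x) = (\<Sum>x\<in>set Us. c x * x)"
    using un by (intro sum.cong) (auto simp: c'_def)
  hence "R.combine Ks (u # Us) = (\<Sum>x\<in>set (u#Us). c' x * x)"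
    using c un by (simp add: Ks c'_def)
  ultimately show ?case by blast
qed

lemma combine_map:
  fixes Us :: "'a::field list"
  assumes "distinct Us"
  shows "R.combine (map c Us) Us = (\<Sum>x\<in>set Us. c x * x)"
  using assms by (induct Us) auto

lemma combine_norm:
  fixes Us Ks :: "'a::field list"
  assumes "distinct Us" "set Ks \<subseteq> F" "0 \<in> F"
  shows "\<exists>c. (\<forall>x\<in>set Us. c x \<in> F) \<and> R.combine Ks Us = (\<Sum>x\<in>set Us. c x * x) \<and>
           ((\<forall>x\<in>set Us. c x = 0) \<longrightarrow> set (take (length Us) Ks) \<subseteq> {0})"
proof -
  define Ks' where "Ks' = take (length Us) Ks @ replicate (length Us - length Ks) \<zero>\<^bsub>RR\<^esub>"
  have len: "length Ks' = length Us" by (simp add: Ks'_def)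
  have "R.combine Ks' Us = R.combine (take (length Us) Ks) Us"
    unfolding Ks'_def by (rule R.combine_append_replicate) simp
  also have "\<dots> = R.combine Ks Us" by (rule R.combine_take)
  finally have eq: "R.combine Ks' Us = R.combine Ks Us" .
  obtain c where c: "set Ks' = c ` set Us" "R.combine Ks' Us = (\<Sum>x\<in>set Us. c x * x)"
    using combine_sum[OF assms(1) len] by blast
  have sK: "set Ks' \<subseteq> F" using assms(2,3) by (auto simp: Ks'_def dest: in_set_takeD)
  have imp: "(\<forall>x\<in>set Us. c x = 0) \<longrightarrow> set (take (length Us) Ks) \<subseteq> {0}"
    using c(1) unfolding Ks'_def by auto
  show ?thesis apply (rule exI[of _ c]) using c sK eq imp by auto
qed

lemma sum_restrict:
  fixes c :: "'a \<Rightarrow> 'a::field"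
  assumes "finite S" "T \<subseteq> S"
  shows "(\<Sum>x\<in>S. (if x \<in> T then c x else 0) * x) = (\<Sum>x\<in>T. c x * x)"
proof -
  have "(\<Sum>x\<in>S. (if x \<in> T then c x else 0) * x) = (\<Sum>x\<in>S. if x \<in> T then c x * x else 0)"
    by (rule sum.cong) auto
  also have "\<dots> = (\<Sum>x\<in>S \<inter> T. c x * x)" using sum.inter_restrict[OF assms(1)] by metis
  also have "S \<inter> T = T" using assms(2) by blast
  finally show ?thesis .
qed

lemma lin_indep_fin:
  fixes S :: "'a::field set"
  assumes "finite S" "0 \<in> F"
  shows "lin_indep_over F S \<longleftrightarrow>
     (\<forall>c. (\<forall>x\<in>S. c x \<in> F) \<longrightarrow> (\<Sum>x\<in>S. c x * x) = 0 \<longrightarrow> (\<forall>x\<in>S. c x = 0))"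
proof
  assume "lin_indep_over F S" thus "\<forall>c. (\<forall>x\<in>S. c x \<in> F) \<longrightarrow> (\<Sum>x\<in>S. c x * x) = 0 \<longrightarrow> (\<forall>x\<in>S. c x = 0)"
    using assms unfolding lin_indep_over_def by blast
next
  assume H: "\<forall>c. (\<forall>x\<in>S. c x \<in> F) \<longrightarrow> (\<Sum>x\<in>S. c x * x) = 0 \<longrightarrow> (\<forall>x\<in>S. c x = 0)"
  show "lin_indep_over F S" unfolding lin_indep_over_def
  proof (intro allI impI)
    fix T c assume T: "finite T" "T \<subseteq> S" "\<forall>x\<in>T. c x \<in> F" "(\<Sum>x\<in>T. c x * x) = 0"
    define c' where "c' x = (if x \<in> T then c x else 0)" for x
    have "(\<Sum>x\<in>S. c' x * x) = (\<Sum>x\<in>T. c x * x)"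
      unfolding c'_def using T assms(1) by (simp add: sum_restrict)
    hence s0: "(\<Sum>x\<in>S. c' x * x) = 0" using T(4) by simp
    have Fc: "\<forall>x\<in>S. c' x \<in> F" using T assms(2) by (auto simp: c'_def)
    have Z: "\<forall>x\<in>S. c' x = 0" using H s0 Fc by blast
    show "\<forall>x\<in>T. c x = 0"
    proof
      fix x assume x: "x \<in> T"
      hence "x \<in> S" using T(2) by blast
      hence "c' x = 0" using Z by blast
      thus "c x = 0" using x by (simp add: c'_def)
    qed
  qed
qed

lemma indep_iff:
  fixes Us :: "'a::field list"
  assumes F: "subfield F RR" and d: "distinct Us"
  shows "R.independent F Us \<longleftrightarrow> lin_indep_over F (set Us)"
proof -
  have F0: "0 \<in> F" using subringE(2)[OF subfieldE(1)[OF F]] by simp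
  show ?thesis
  proof
    assume I: "R.independent F Us"
    show "lin_indep_over F (set Us)"
      unfolding lin_indep_fin[OF finite_set F0]
    proof (intro allI impI)
      fix c assume c: "\<forall>x\<in>set Us. c x \<in> F" "(\<Sum>x\<in>set Us. c x * x) = 0"
      have "R.combine (map c Us) Us = \<zero>\<^bsub>RR\<^esub>" using combine_map[OF d, of c] c by simp
      moreover have "set (map c Us) \<subseteq> F" using c by auto
      ultimately have "set (take (length Us) (map c Us)) \<subseteq> {\<zero>\<^bsub>RR\<^esub>}"
        using R.independent_imp_trivial_combine[OF F I] by blast
      thus "\<forall>x\<in>set Us. c x = 0" by auto
    qed
  next
    assume I: "lin_indep_over F (set Us)"
    show "R.independent F Us"
    proof (rule R.trivial_combine_imp_independent[OF F])
      show "set Us \<subseteq> carrier RR" by simp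
      fix Ks assume Ks: "set Ks \<subseteq> F" "R.combine Ks Us = \<zero>\<^bsub>RR\<^esub>"
      obtain c where c: "\<forall>x\<in>set Us. c x \<in> F" "R.combine Ks Us = (\<Sum>x\<in>set Us. c x * x)"
           "(\<forall>x\<in>set Us. c x = 0) \<longrightarrow> set (take (length Us) Ks) \<subseteq> {0}"
        using combine_norm[OF d Ks(1) F0] by blast
      have "\<forall>x\<in>set Us. c x = 0"
        using I c(1,2) Ks(2) unfolding lin_indep_fin[OF finite_set F0] by auto
      thus "set (take (length Us) Ks) \<subseteq> {\<zero>\<^bsub>RR\<^esub>}" using c(3) by simp
    qed
  qed
qed

lemma span_eq_distinct:
  fixes Us :: "'a::field list"
  assumes F: "subfield F RR" and d: "distinct Us"
  shows "span_over F (set Us) = R.Span F Us"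
proof -
  have F0: "0 \<in> F" using subringE(2)[OF subfieldE(1)[OF F]] by simp
  have Sp: "R.Span F Us = {R.combine Ks Us |Ks. set Ks \<subseteq> F}"
    by (rule R.Span_eq_combine_set[OF F]) simp
  show ?thesis
  proof
    show "span_over F (set Us) \<subseteq> R.Span F Us"
    proof
      fix v assume "v \<in> span_over F (set Us)"
      then obtain T c where T: "v = (\<Sum>x\<in>T. c x * x)" "finite T" "T \<subseteq> set Us" "\<forall>x\<in>T. c x \<in> F"
        unfolding span_over_def by blast
      define c' where "c' x = (if x \<in> T then c x else 0)" for x
      have "(\<Sum>x\<in>set Us. c' x * x) = (\<Sum>x\<in>T. c x * x)"
        unfolding c'_def using T by (simp add: sum_restrict)
      hence "v = R.combine (map c' Us) Us" using combine_map[OF d, of c'] T by simp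
      moreover have "set (map c' Us) \<subseteq> F" using T F0 by (auto simp: c'_def)
      ultimately show "v \<in> R.Span F Us" unfolding Sp by blast
    qed
  next
    show "R.Span F Us \<subseteq> span_over F (set Us)"
    proof
      fix v assume "v \<in> R.Span F Us"
      then obtain Ks where Ks: "set Ks \<subseteq> F" "v = R.combine Ks Us" unfolding Sp by blast
      obtain c where c: "\<forall>x\<in>set Us. c x \<in> F" "R.combine Ks Us = (\<Sum>x\<in>set Us. c x * x)"
        using combine_norm[OF d Ks(1) F0] by blast
      thus "v \<in> span_over F (set Us)" unfolding span_over_def using Ks by blast
    qed
  qed
qed

lemma span_eq:
  fixes Us :: "'a::field list"
  assumes F: "subfield F RR"
  shows "span_over F (set Us) = R.Span F Us"
proof -
  have "R.Span F Us = R.Span F (remdups Us)"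
    by (rule R.Span_same_set[OF F]) simp_all
  thus ?thesis using span_eq_distinct[OF F, of "remdups Us"] by simp
qed

lemma eval_poly: "R.eval P (x::'a::field) = poly (Poly (rev P)) x"
proof (induct P)
  case Nil thus ?case by simp
next
  case (Cons a P)
  have "R.eval (a # P) x = a * x ^ length P + R.eval P x" by simp
  thus ?case using Cons by (simp add: Poly_append poly_monom algebra_simps)
qed

lemma algebraic_over_imp:
  fixes x :: "'a::field"
  assumes "algebraic_over K x"
  shows "\<not> R.transcendental K x"
proof -
  obtain p :: "'a poly" where p: "p \<noteq> 0" "\<forall>i. Polynomial.coeff p i \<in> K" "poly p x = 0"
    using assms unfolding algebraic_over_def by blast
  define P where "P = rev (coeffs p)"
  have "set P \<subseteq> K" using p(2) by (auto simp: P_def coeffs_def)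
  moreover have "hd P \<noteq> 0" using p(1) by (simp add: P_def hd_rev last_coeffs_eq_coeff_degree)
  ultimately have "P \<in> carrier (K[X]\<^bsub>RR\<^esub>)"
    unfolding sym[OF univ_poly_carrier] polynomial_def by simp
  moreover have "P \<noteq> []" using p(1) by (simp add: P_def)
  moreover have "R.eval P x = \<zero>\<^bsub>RR\<^esub>" using p(3) by (simp add: eval_poly P_def)
  ultimately show ?thesis using R.algebraicI unfolding over_def by blast
qed

lemma imp_algebraic_over:
  fixes x :: "'a::field"
  assumes K: "subfield K RR" and "\<not> R.transcendental K x"
  shows "algebraic_over K x"
proof -
  obtain P where P: "P \<in> carrier (K[X]\<^bsub>RR\<^esub>)" "P \<noteq> []" "R.eval P x = \<zero>\<^bsub>RR\<^esub>"
    using R.algebraicE[OF subfieldE(1)[OF K], of x] assms(2) unfolding over_def by auto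
  have pol: "set P \<subseteq> K" "hd P \<noteq> 0"
    using P(1,2) unfolding sym[OF univ_poly_carrier] polynomial_def by auto
  define p where "p = Poly (rev P)"
  have K0: "0 \<in> K" using subringE(2)[OF subfieldE(1)[OF K]] by simp
  have "p \<noteq> 0"
  proof
    assume "p = 0"
    hence "\<forall>i. Polynomial.coeff p i = 0" by simp
    moreover have "Polynomial.coeff p (length P - 1) = hd P"
      using P(2) unfolding p_def
      by (cases P) (auto simp: nth_default_def nth_append)
    ultimately show False using pol by simp
  qed
  moreover have "\<forall>i. Polynomial.coeff p i \<in> K"
  proof
    fix i show "Polynomial.coeff p i \<in> K"
      using pol(1) K0 unfolding p_def
      by (auto simp: nth_default_def) (metis length_rev nth_mem set_rev subsetD)
  qed
  moreover have "poly p x = 0" using P(3) by (simp add: eval_poly p_def)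
  ultimately show ?thesis unfolding algebraic_over_def by blast
qed

lemma finite_ext_imp:
  fixes K E :: "'a::field set"
  assumes "finite_ext K E"
  shows "subfield K RR" "subfield E RR" "K \<subseteq> E" "R.finite_dimension K E"
proof -
  show sK: "subfield K RR" "subfield E RR" "K \<subseteq> E"
    using assms is_subfield_imp unfolding finite_ext_def field_ext_def by auto
  obtain B where B: "finite B" "B \<subseteq> E" "span_over K B = E"
    using assms unfolding finite_ext_def by blast
  obtain Us where "set Us = B" using finite_list[OF B(1)] by blast
  hence "R.Span K Us = E" using span_eq[OF sK(1), of Us] B(3) by simp
  thus "R.finite_dimension K E" using R.Span_finite_dimension[OF sK(1), of Us] by simp
qed

lemma imp_finite_ext:
  fixes K E :: "'a::field set"
  assumes sK: "subfield K RR" and sE: "subfield E RR" and "K \<subseteq> E" and fd: "R.finite_dimension K E"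
  shows "finite_ext K E"
proof -
  obtain n where "R.dimension n K E" using fd by (rule R.finite_dimensionE')
  then obtain Vs where Vs: "R.Span K Vs = E" using R.exists_base[OF sK] by blast
  have "set Vs \<subseteq> R.Span K Vs" by (rule R.Span_base_incl[OF sK]) simp
  moreover have "span_over K (set Vs) = E" using span_eq[OF sK, of Vs] Vs by simp
  ultimately show ?thesis using assms imp_is_subfield Vs
    unfolding finite_ext_def field_ext_def by blast
qed

lemma Span_mono_field:
  fixes K F :: "'a::field set"
  assumes sK: "subfield K RR" and sF: "subfield F RR" and "K \<subseteq> F"
  shows "R.Span K Us \<subseteq> R.Span F Us"
proof -
  have "R.Span K Us = {R.combine Ks Us |Ks. set Ks \<subseteq> K}"
    by (rule R.Span_eq_combine_set[OF sK]) simp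
  moreover have "R.Span F Us = {R.combine Ks Us |Ks. set Ks \<subseteq> F}"
    by (rule R.Span_eq_combine_set[OF sF]) simp
  ultimately show ?thesis using assms(3) by blast
qed

lemma indep_mono_field:
  fixes K F :: "'a::field set"
  assumes sK: "subfield K RR" and sF: "subfield F RR" and KF: "K \<subseteq> F"
  shows "R.independent F Us \<Longrightarrow> R.independent K Us"
proof (induct Us)
  case Nil thus ?case by simp
next
  case (Cons u Us)
  have "u \<notin> R.Span F Us" "R.independent F Us"
    using R.independent_backwards[OF Cons(2)] by auto
  hence "u \<notin> R.Span K Us" "R.independent K Us"
    using Span_mono_field[OF sK sF KF, of Us] Cons(1) by auto
  thus ?case by (intro R.li_Cons) auto
qed

lemma shorter_base:
  fixes F :: "'a::field set"
  assumes sF: "subfield F RR"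
  shows "\<exists>Ws. R.independent F Ws \<and> R.Span F Ws = R.Span F W \<and> length Ws \<le> length W \<and>
           (\<not> R.independent F W \<longrightarrow> length Ws < length W)"
proof (induct W)
  case Nil thus ?case by (intro exI[of _ "[]"]) simp
next
  case (Cons u W)
  then obtain Ws where Ws: "R.independent F Ws" "R.Span F Ws = R.Span F W" "length Ws \<le> length W"
     "\<not> R.independent F W \<longrightarrow> length Ws < length W" by blast
  show ?case
  proof (cases "u \<in> R.Span F W")
    case True
    have "set W \<subseteq> R.Span F W" by (rule R.Span_base_incl[OF sF]) simp
    hence "R.Span F (u # W) \<subseteq> R.Span F W"
      using True by (intro R.mono_Span_subset[OF sF]) auto
    moreover have "R.Span F W \<subseteq> R.Span F (u # W)"
      by (intro R.mono_Span_sublist[OF sF]) auto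
    ultimately have "R.Span F Ws = R.Span F (u # W)" using Ws(2) by blast
    thus ?thesis using Ws by (intro exI[of _ Ws]) auto
  next
    case False
    have i: "R.independent F (u # Ws)" using False Ws(1,2) by (intro R.li_Cons) auto
    have "R.Span F (u # Ws) = R.Span F (u # W)" using Ws(2) by (simp add: R.Span.simps)
    moreover have "\<not> R.independent F (u # W) \<longrightarrow> \<not> R.independent F W"
      using False R.li_Cons[of u F W] by auto
    ultimately show ?thesis using Ws i by (intro exI[of _ "u # Ws"]) auto
  qed
qed

lemma indep_subset: "lin_indep_over F S \<Longrightarrow> T \<subseteq> S \<Longrightarrow> lin_indep_over F T"
  unfolding lin_indep_over_def by blast

lemma notin_disjoint:
  fixes K K' L :: "'a::field set"
  assumes sK: "is_subfield K" and sK': "is_subfield K'" and sL: "is_subfield L"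
    and disj: "lin_disjoint K K' L" and a: "a \<in> L" "a \<notin> K"
  shows "a \<notin> K'"
proof
  assume aK': "a \<in> K'"
  have K0: "0 \<in> K" and K1: "1 \<in> K" using sK unfolding is_subfield_def by auto
  have a1: "a \<noteq> 1" using a K1 by auto
  have fin: "finite {1, a}" by simp
  have "lin_indep_over K {1, a}"
    unfolding lin_indep_fin[OF fin K0]
  proof (intro allI impI)
    fix c assume c: "\<forall>x\<in>{1, a}. c x \<in> K" "(\<Sum>x\<in>{1, a}. c x * x) = 0"
    hence s: "c 1 + c a * a = 0" using a1 by simp
    have "c a = 0"
    proof (rule ccontr)
      assume ca: "c a \<noteq> 0"
      hence "a = (0 - c 1) * inverse (c a)" using s by (simp add: field_simps eq_neg_iff_add_eq_0)
      moreover have "(0 - c 1) * inverse (c a) \<in> K"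
      proof -
        have "0 - c 1 \<in> K" "inverse (c a) \<in> K" using sK c(1) K0 ca unfolding is_subfield_def by auto
        thus ?thesis using sK unfolding is_subfield_def by blast
      qed
      ultimately show False using a by simp
    qed
    thus "\<forall>x\<in>{1, a}. c x = 0" using s by simp
  qed
  moreover have "{1, a} \<subseteq> K'" using sK' aK' unfolding is_subfield_def by auto
  ultimately have "lin_indep_over L {1, a}" using disj unfolding lin_disjoint_def by blast
  moreover have L0: "0 \<in> L" and L1: "0 - 1 \<in> L" using sL unfolding is_subfield_def by auto
  ultimately have H: "\<forall>c. (\<forall>x\<in>{1, a}. c x \<in> L) \<longrightarrow> (\<Sum>x\<in>{1, a}. c x * x) = 0 \<longrightarrow> (\<forall>x\<in>{1, a}. c x = 0)"
    using lin_indep_fin[OF fin L0] by blast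
  define c where "c x = (if x = 1 then a else (0 - 1))" for x :: 'a
  have "\<forall>x\<in>{1, a}. c x \<in> L" using a L1 by (auto simp: c_def)
  moreover have "(\<Sum>x\<in>{1, a}. c x * x) = 0" using a1 by (simp add: c_def)
  ultimately have "c a = 0" using H by blast
  thus False using a1 by (simp add: c_def)
qed

lemma core:
  fixes K K' E M0 :: "'a::field set" and a :: 'a
  assumes sK: "subfield K RR" and sK': "subfield K' RR" and sE: "subfield E RR"
    and sM0: "subfield M0 RR"
    and KK': "K \<subseteq> K'" and K'E: "K' \<subseteq> E" and KM0: "K \<subseteq> M0" and aM0: "a \<in> M0"
    and algK: "\<not> R.transcendental K a" and disj: "lin_disjoint K M0 E"
    and iTs: "R.independent K' Ts" and Ts: "set Ts \<subseteq> R.simple_extension K' a"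
  shows "R.independent E Ts"
proof -
  have algK_o: "(R.algebraic over K) a" using algK by (simp add: over_def)
  have algK': "\<not> R.transcendental K' a" using R.algebraic_mono[OF KK' algK_o] by (simp add: over_def)
  hence algK'_o: "(R.algebraic over K') a" by (simp add: over_def)
  define d where "d = length (R.Irr K a) - 1"
  define P where "P = R.exp_base a d"
  have lenP: "length P = d" by (simp add: P_def R.exp_base_def)
  have iP: "R.independent K P" unfolding P_def d_def
    by (rule R.exp_base_independent[OF sK _ algK_o]) simp
  have dP: "distinct P" by (rule R.independent_distinct[OF sK iP])
  have "set P \<subseteq> R.Span K P" by (rule R.Span_base_incl[OF sK]) simp
  also have "R.Span K P = R.simple_extension K a" unfolding P_def d_def
    by (rule R.Span_exp_base[OF sK _ algK_o]) simp
  finally have P1: "set P \<subseteq> R.simple_extension K a" .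
  have "R.simple_extension K a \<subseteq> M0"
    by (rule R.simple_extension_subring_incl[OF subfieldE(1)[OF sM0] KM0 aM0])
  hence "set P \<subseteq> M0" using P1 by blast
  moreover have "lin_indep_over K (set P)" using indep_iff[OF sK dP] iP by simp
  ultimately have "lin_indep_over E (set P)" using disj unfolding lin_disjoint_def by blast
  hence iPE: "R.independent E P" using indep_iff[OF sE dP] by simp
  define M where "M = R.simple_extension K' a"
  have PM: "set P \<subseteq> M" using P1 R.mono_simple_extension[OF KK', of a] unfolding M_def by blast
  define d' where "d' = length (R.Irr K' a) - 1"
  have dimM: "R.dimension d' K' M" unfolding M_def d'_def
    by (rule R.dimension_simple_extension[OF sK' _ algK'_o]) simp
  have IrrK: "R.Irr K a \<in> carrier (K[X]\<^bsub>RR\<^esub>)" "R.eval (R.Irr K a) a = \<zero>\<^bsub>RR\<^esub>"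
    using R.IrrE(1,4)[OF sK _ algK_o] by auto
  have "carrier (K[X]\<^bsub>RR\<^esub>) \<subseteq> carrier (K'[X]\<^bsub>RR\<^esub>)"
    using KK' unfolding univ_poly_def polynomial_def by auto
  hence IrrK': "R.Irr K a \<in> carrier (K'[X]\<^bsub>RR\<^esub>)" using IrrK(1) by blast
  have ne: "R.Irr K a \<noteq> []"
    using R.IrrE(2)[OF sK _ algK_o] unfolding ring_irreducible_def univ_poly_zero by auto
  have "R.Irr K' a pdivides\<^bsub>RR\<^esub> R.Irr K a"
    by (rule R.Irr_minimal[OF sK' _ algK'_o IrrK' IrrK(2)]) simp
  hence "length (R.Irr K' a) - 1 \<le> length (R.Irr K a) - 1"
    using R.pdivides_imp_degree_le[OF subfieldE(1)[OF sK'] R.IrrE(1)[OF sK' _ algK'_o] IrrK' ne]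
    by simp
  hence d'd: "d' \<le> d" unfolding d_def d'_def .
  obtain Vs where Vs: "length (Vs @ Ts) = d'" "R.independent K' (Vs @ Ts)" "R.Span K' (Vs @ Ts) = M"
    using R.complete_base[OF sK' dimM iTs] Ts unfolding M_def by blast
  have iW: "R.independent E (Vs @ Ts)"
  proof (rule ccontr)
    assume dep: "\<not> R.independent E (Vs @ Ts)"
    obtain Ws where Ws: "R.independent E Ws" "R.Span E Ws = R.Span E (Vs @ Ts)"
      "\<not> R.independent E (Vs @ Ts) \<longrightarrow> length Ws < length (Vs @ Ts)"
      using shorter_base[OF sE, of "Vs @ Ts"] by blast
    have "set P \<subseteq> R.Span E Ws"
      using PM Vs(3) Span_mono_field[OF sK' sE K'E, of "Vs @ Ts"] Ws(2) by blast
    hence "length P \<le> length Ws" by (rule R.independent_length_le[OF sE iPE Ws(1)])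
    thus False using Ws(3) dep Vs(1) lenP d'd by simp
  qed
  show ?thesis by (rule R.independent_split(1)[OF sE iW])
qed

theorem lemma2p2:
  fixes K L K' :: "'a::field_char_0 set"
  assumes "alg_closed_type TYPE('a)"
    and "vast K L"
    and "finite_ext K K'"
    and "lin_disjoint K K' L"
  shows "vast K' (compositum L K')"
proof -
  have isK: "is_subfield K" and isL: "is_subfield L" and KL: "K \<subseteq> L"
    and algL: "\<forall>x\<in>L. algebraic_over K x" and LneK: "L \<noteq> K"
    and vastE: "\<And>E. finite_ext K E \<Longrightarrow> \<exists>M. is_subfield M \<and> K \<subset> M \<and> M \<subseteq> L \<and> lin_disjoint K M E"
    using assms(2) unfolding vast_def algebraic_ext_def field_ext_def by blast+
  have sK: "subfield K RR" and sL: "subfield L RR" using isK isL is_subfield_imp by auto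
  have sK': "subfield K' RR" and KK': "K \<subseteq> K'" and fdKK': "R.finite_dimension K K'"
    using finite_ext_imp[OF assms(3)] by auto
  have isK': "is_subfield K'" using sK' imp_is_subfield by auto
  define C where "C = compositum L K'"
  have isC: "is_subfield C" unfolding C_def compositum_def is_subfield_def by auto
  have LC: "L \<subseteq> C" and K'C: "K' \<subseteq> C" unfolding C_def compositum_def by auto
  have minC: "\<And>F. is_subfield F \<Longrightarrow> L \<subseteq> F \<Longrightarrow> K' \<subseteq> F \<Longrightarrow> C \<subseteq> F"
    unfolding C_def compositum_def by auto
  have sC: "subfield C RR" using isC is_subfield_imp by auto
  have notin: "\<And>a. a \<in> L \<Longrightarrow> a \<notin> K \<Longrightarrow> a \<notin> K'"
    using notin_disjoint[OF isK isK' isL assms(4)] by blast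
  define A where "A = {x \<in> carrier RR. (R.algebraic over K') x}"
  have sA: "subfield A RR" unfolding A_def
    by (rule field.subfield_of_algebraics[OF field_RR sK'])
  have "L \<subseteq> A"
  proof
    fix x assume "x \<in> L"
    hence "\<not> R.transcendental K x" using algL algebraic_over_imp by blast
    hence "(R.algebraic over K) x" by (simp add: over_def)
    hence "(R.algebraic over K') x" by (rule R.algebraic_mono[OF KK'])
    thus "x \<in> A" unfolding A_def by simp
  qed
  moreover have "K' \<subseteq> A"
  proof
    fix x assume "x \<in> K'"
    hence "(R.algebraic over K') x" by (rule R.algebraic_self[OF subfieldE(1)[OF sK']])
    thus "x \<in> A" unfolding A_def by simp
  qed
  ultimately have CA: "C \<subseteq> A" using minC imp_is_subfield[OF sA] by blast
  have algC: "\<forall>x\<in>C. algebraic_over K' x"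
  proof
    fix x assume "x \<in> C"
    hence "(R.algebraic over K') x" using CA unfolding A_def by blast
    hence "\<not> R.transcendental K' x" by (simp add: over_def)
    thus "algebraic_over K' x" by (rule imp_algebraic_over[OF sK'])
  qed
  obtain l where l: "l \<in> L" "l \<notin> K" using LneK KL by blast
  have CneK': "C \<noteq> K'" using l LC notin by blast
  have main: "\<exists>M. is_subfield M \<and> K' \<subset> M \<and> M \<subseteq> C \<and> lin_disjoint K' M E"
    if fE: "finite_ext K' E" for E
  proof -
    have sE: "subfield E RR" and K'E: "K' \<subseteq> E" and fdE: "R.finite_dimension K' E"
      using finite_ext_imp[OF fE] by auto
    have fdKE: "R.finite_dimension K E"
      by (rule R.telescopic_base_dim(1)[OF sK sK' fdKK' fdE])
    have "finite_ext K E" using imp_finite_ext[OF sK sE _ fdKE] KK' K'E by blast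
    then obtain M0 where M0: "is_subfield M0" "K \<subset> M0" "M0 \<subseteq> L" "lin_disjoint K M0 E"
      using vastE by blast
    obtain a where a: "a \<in> M0" "a \<notin> K" using M0(2) by blast
    have aL: "a \<in> L" using a M0(3) by blast
    have aK': "a \<notin> K'" using notin[OF aL a(2)] .
    have algK: "\<not> R.transcendental K a" using algL aL algebraic_over_imp by blast
    hence "(R.algebraic over K) a" by (simp add: over_def)
    hence algK'_o: "(R.algebraic over K') a" by (rule R.algebraic_mono[OF KK'])
    define M where "M = R.simple_extension K' a"
    have sM: "subfield M RR" unfolding M_def
      using R.simple_extension_is_subfield[OF sK', of a] algK'_o by simp
    have K'M: "K' \<subseteq> M" unfolding M_def
      by (rule R.simple_extension_incl) (use subfieldE(3)[OF sK'] in auto)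
    have aM: "a \<in> M" unfolding M_def
      by (rule R.simple_extension_mem[OF subfieldE(1)[OF sK']]) simp
    have MC: "M \<subseteq> C" unfolding M_def
      by (rule R.simple_extension_subring_incl[OF subfieldE(1)[OF sC] K'C]) (use aL LC in blast)
    have disj: "lin_disjoint K' M E" unfolding lin_disjoint_def
    proof (intro allI impI)
      fix S assume S: "S \<subseteq> M" "lin_indep_over K' S"
      show "lin_indep_over E S" unfolding lin_indep_over_def
      proof (intro allI impI)
        fix T c assume T: "finite T" "T \<subseteq> S" "\<forall>x\<in>T. c x \<in> E" "(\<Sum>x\<in>T. c x * x) = 0"
        obtain Ts where Ts: "set Ts = T" "distinct Ts" using finite_distinct_list[OF T(1)] by blast
        have "lin_indep_over K' T" using indep_subset[OF S(2) T(2)] .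
        hence "R.independent K' Ts" using indep_iff[OF sK' Ts(2)] Ts(1) by simp
        moreover have "K \<subseteq> M0" using M0(2) by blast
        moreover have "set Ts \<subseteq> R.simple_extension K' a" using S(1) T(2) Ts(1) unfolding M_def by blast
        ultimately have "R.independent E Ts"
          using core[OF sK sK' sE is_subfield_imp[OF M0(1)] KK' K'E _ a(1) algK M0(4)] by blast
        hence "lin_indep_over E T" using indep_iff[OF sE Ts(2)] Ts(1) by simp
        thus "\<forall>x\<in>T. c x = 0" using T unfolding lin_indep_over_def by blast
      qed
    qed
    show ?thesis using sM imp_is_subfield K'M aM aK' MC disj by blast
  qed
  show ?thesis
    unfolding vast_def algebraic_ext_def field_ext_def
    using isK' isC K'C algC CneK' main unfolding C_def by blast
qed

end
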